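(* Let $\phi$ be a topological flow on a compact metric space $(M,\mathrm{dist})$, let $K\subset M\setminus\mathrm{Sing}(\phi)$ be compact, let $T_0\in(0,1)$ satisfy $\phi(t,x)\neq x$ for all $t\in(0,2T_0]$ and $x\in K$, and let $\tilde K=\bigcap_{t\in[-2T_0,2T_0]}\phi(t,K)$. Then for every $\varepsilon>0$ there exists $\varepsilon_1>0$ with the following property: if $\xi\in\mathcal{P}$, $t_0\in\mathbb{R}$, $T_1\ge T_0$, $g\in\mathrm{Rep}$ with $g(0)=0$, and $y\in M$ satisfy $\mathrm{dist}(\xi(t+t_0),\phi(g(t),y))<\varepsilon_1$ and $\xi(t+t_0),\ \phi(g(t),y)\in\tilde K$ for all $t\in[0,T_1]$, then there exists $\tilde g\in\mathrm{Rep}(\varepsilon)$ with $\tilde g(0)=g(0)$ and $\tilde g(T_1)=g(T_1)$ such that $\mathrm{dist}(\xi(t+t_0),\phi(\tilde g(t),y))<\varepsilon$ for all $t\in[0,T_1]$.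
   Context: A topological flow is a continuous $\phi:\mathbb{R}\times M\to M$ with $\phi(0,x)=x$, $\phi(s+t,x)=\phi(s,\phi(t,x))$; $\mathrm{Sing}(\phi)$ is its set of fixed points. $\mathcal{P}$ denotes the set of all functions $\xi:\mathbb{R}\to M$ with $\xi(t+nT_0)=\phi(t,\xi(nT_0))$ for all $t\in[0,T_0)$ and $n\in\mathbb{Z}$. $\mathrm{Rep}$ is the set of orientation-preserving homeomorphisms of $\mathbb{R}$, and $\mathrm{Rep}(\varepsilon)=\{f\in\mathrm{Rep}: |\frac{f(a)-f(b)}{a-b}-1|<\varepsilon\ \forall a>b\}$. *)

theory Defs
  imports "HOL-Analysis.Analysis"
begin

definition topological_flow :: "(real \<Rightarrow> 'a::topological_space \<Rightarrow> 'a) \<Rightarrow> bool" where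
  "topological_flow \<phi> \<longleftrightarrow>
     continuous_on UNIV (\<lambda>(t, x). \<phi> t x) \<and>
     (\<forall>x. \<phi> 0 x = x) \<and>
     (\<forall>s t x. \<phi> (s + t) x = \<phi> s (\<phi> t x))"

definition Sing :: "(real \<Rightarrow> 'a \<Rightarrow> 'a) \<Rightarrow> 'a set" where
  "Sing \<phi> = {x. \<forall>t. \<phi> t x = x}"

definition Pset :: "(real \<Rightarrow> 'a \<Rightarrow> 'a) \<Rightarrow> real \<Rightarrow> (real \<Rightarrow> 'a) set" where
  "Pset \<phi> T0 = {\<xi>. \<forall>n::int. \<forall>t\<in>{0..<T0}.
        \<xi> (t + of_int n * T0) = \<phi> t (\<xi> (of_int n * T0))}"

definition Rep :: "(real \<Rightarrow> real) set" where
  "Rep = {f. (\<exists>g. homeomorphism UNIV UNIV f g) \<and> strict_mono f}"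

definition Rep_eps :: "real \<Rightarrow> (real \<Rightarrow> real) set" where
  "Rep_eps \<epsilon> = {f \<in> Rep. \<forall>a b. a > b \<longrightarrow> \<bar>(f a - f b) / (a - b) - 1\<bar> < \<epsilon>}"

end

theory Submission
  imports Defs
begin


lemma flow_add: "topological_flow \<phi> \<Longrightarrow> \<phi> (s + t) x = \<phi> s (\<phi> t x)"
  by (simp add: topological_flow_def)
lemma flow_0: "topological_flow \<phi> \<Longrightarrow> \<phi> 0 x = x"
  by (simp add: topological_flow_def)
lemma flow_cont: "topological_flow \<phi> \<Longrightarrow> continuous_on UNIV (\<lambda>(t, x). \<phi> t x)"
  by (simp add: topological_flow_def)

lemma flow_uc_space:
  fixes \<phi> :: "real \<Rightarrow> 'a::metric_space \<Rightarrow> 'a"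
  assumes "topological_flow \<phi>" "compact (UNIV :: 'a set)" "e > 0"
  shows "\<exists>d>0. \<forall>t\<in>{-2..2}. \<forall>x z. dist x z < d \<longrightarrow> dist (\<phi> t x) (\<phi> t z) < e"
proof -
  have "uniformly_continuous_on ({-2..2::real} \<times> (UNIV::'a set)) (\<lambda>(t, x). \<phi> t x)"
    by (rule compact_uniformly_continuous)
      (use flow_cont[OF assms(1)] continuous_on_subset in blast,
       intro compact_Times, auto simp: assms(2))
  then obtain d where d: "d > 0" "\<forall>p\<in>{-2..2::real} \<times> (UNIV::'a set). \<forall>p'\<in>{-2..2::real} \<times> (UNIV::'a set).
      dist p' p < d \<longrightarrow> dist ((\<lambda>(t, x). \<phi> t x) p') ((\<lambda>(t, x). \<phi> t x) p) < e"
    unfolding uniformly_continuous_on_def using assms(3) by metis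
  show ?thesis
  proof (intro exI[of _ d] conjI ballI allI impI)
    fix t and x z :: 'a assume "t \<in> {-2..2::real}" "dist x z < d"
    then show "dist (\<phi> t x) (\<phi> t z) < e"
      using d(2)[rule_format, of "(t,z)" "(t,x)"] by (auto simp: dist_Pair_Pair)
  qed (rule d(1))
qed

lemma flow_uc_time:
  fixes \<phi> :: "real \<Rightarrow> 'a::metric_space \<Rightarrow> 'a"
  assumes "topological_flow \<phi>" "compact (UNIV :: 'a set)" "e > 0"
  shows "\<exists>d>0. \<forall>t x. \<bar>t\<bar> < d \<longrightarrow> dist (\<phi> t x) x < e"
proof -
  have "uniformly_continuous_on ({-1..1::real} \<times> (UNIV::'a set)) (\<lambda>(t, x). \<phi> t x)"
    by (rule compact_uniformly_continuous)
      (use flow_cont[OF assms(1)] continuous_on_subset in blast,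
       intro compact_Times, auto simp: assms(2))
  then obtain d where d: "d > 0" "\<forall>p\<in>{-1..1::real} \<times> (UNIV::'a set). \<forall>p'\<in>{-1..1::real} \<times> (UNIV::'a set).
      dist p' p < d \<longrightarrow> dist ((\<lambda>(t, x). \<phi> t x) p') ((\<lambda>(t, x). \<phi> t x) p) < e"
    unfolding uniformly_continuous_on_def using assms(3) by metis
  show ?thesis
  proof (intro exI[of _ "min d 1"] conjI allI impI)
    fix t x assume "\<bar>t\<bar> < min d 1"
    then show "dist (\<phi> t x) x < e"
      using d(2)[rule_format, of "(0,x)" "(t,x)"] flow_0[OF assms(1), of x]
      by (auto simp: dist_Pair_Pair dist_real_def abs_less_iff)
  qed (use d(1) in simp)
qed

lemma flow_eta:
  fixes \<phi> :: "real \<Rightarrow> 'a::metric_space \<Rightarrow> 'a"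
  assumes "topological_flow \<phi>" "compact K" "\<forall>t\<in>{0<..2*T0}. \<forall>x\<in>K. \<phi> t x \<noteq> x" "0 < \<delta>"
  shows "\<exists>\<eta>>0. \<forall>t\<in>{\<delta>..2*T0}. \<forall>x\<in>K. \<eta> \<le> dist (\<phi> t x) x"
proof (cases "{\<delta>..2*T0} \<times> K = {}")
  case True then show ?thesis by (auto intro: exI[of _ 1])
next
  case False
  have c: "continuous_on ({\<delta>..2*T0} \<times> K) (\<lambda>p. dist (\<phi> (fst p) (snd p)) (snd p))"
  proof -
    have "continuous_on ({\<delta>..2*T0} \<times> K) (\<lambda>(t, x). \<phi> t x)"
      using flow_cont[OF assms(1)] continuous_on_subset by blast
    then have "continuous_on ({\<delta>..2*T0} \<times> K) (\<lambda>p. \<phi> (fst p) (snd p))"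
      by (simp add: case_prod_beta')
    then show ?thesis by (intro continuous_intros)
  qed
  obtain p where p: "p \<in> {\<delta>..2*T0} \<times> K"
    "\<forall>q\<in>{\<delta>..2*T0} \<times> K. dist (\<phi> (fst p) (snd p)) (snd p) \<le> dist (\<phi> (fst q) (snd q)) (snd q)"
    using continuous_attains_inf[OF compact_Times[OF compact_Icc assms(2)] False c] by blast
  have "dist (\<phi> (fst p) (snd p)) (snd p) > 0"
    using p(1) assms(3) assms(4) by (auto simp: mem_Times_iff)
  then show ?thesis using p(2) by (intro exI[of _ "dist (\<phi> (fst p) (snd p)) (snd p)"]) force
qed



lemma chain_bound:
  fixes h :: "real \<Rightarrow> real" and T1 W D s t :: real
  assumes loc: "\<And>s t. 0 \<le> s \<Longrightarrow> s \<le> t \<Longrightarrow> t \<le> T1 \<Longrightarrow> t - s \<le> W \<Longrightarrow> \<bar>h t - h s\<bar> \<le> D"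
    and W: "0 < W" and D: "0 \<le> D"
  shows "s \<in> {0..T1} \<Longrightarrow> t \<in> {0..T1} \<Longrightarrow> \<bar>h t - h s\<bar> \<le> D + D / W * \<bar>t - s\<bar>"
proof -
  have main: "\<forall>s t. 0 \<le> s \<longrightarrow> s \<le> t \<longrightarrow> t \<le> T1 \<longrightarrow> t - s \<le> real n * W \<longrightarrow>
      \<bar>h t - h s\<bar> \<le> D + D / W * (t - s)" for n :: nat
  proof (induction n)
    case 0 then show ?case using D by auto
  next
    case (Suc n)
    show ?case
    proof (intro allI impI)
      fix s t :: real assume st: "0 \<le> s" "s \<le> t" "t \<le> T1" "t - s \<le> real (Suc n) * W"
      have nn: "0 \<le> D / W * (t - s)" using st D W by simp
      show "\<bar>h t - h s\<bar> \<le> D + D / W * (t - s)"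
      proof (cases "t - s \<le> W")
        case True then show ?thesis using loc[OF st(1-3)] nn by linarith
      next
        case False
        define m where "m = s + W"
        have m: "0 \<le> m" "m \<le> t" "t - m \<le> real n * W" using st False W by (auto simp: m_def algebra_simps)
        have "\<bar>h m - h s\<bar> \<le> D" using loc[of s m] st W m by (auto simp: m_def)
        moreover have "\<bar>h t - h m\<bar> \<le> D + D / W * (t - m)" using Suc.IH m st by blast
        moreover have "D / W * (t - m) + D = D / W * (t - s)"
          using W by (simp add: m_def field_simps)
        ultimately show ?thesis by linarith
      qed
    qed
  qed
  have gen: "\<bar>h t - h s\<bar> \<le> D + D / W * \<bar>t - s\<bar>" if "s \<in> {0..T1}" "t \<in> {0..T1}" "s \<le> t" for s t
  proof -
    define n where "n = nat \<lceil>(t - s) / W\<rceil>"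
    have "(t - s) / W \<le> real n" unfolding n_def by (rule real_nat_ceiling_ge)
    then have "t - s \<le> real n * W" using W by (simp add: divide_le_eq)
    then show ?thesis using main[of n] that by auto
  qed
  assume "s \<in> {0..T1}" "t \<in> {0..T1}"
  then show ?thesis using gen[of s t] gen[of t s]
    by (cases "s \<le> t") (auto simp: abs_minus_commute)
qed

definition KT :: "(real \<Rightarrow> 'a \<Rightarrow> 'a) \<Rightarrow> 'a set \<Rightarrow> real \<Rightarrow> 'a set" where
  "KT \<phi> K T0 = (\<Inter>s\<in>{-2*T0..2*T0}. \<phi> s ` K)"

lemma KT_flow:
  assumes "topological_flow \<phi>" "x \<in> KT \<phi> K T0" "c \<in> {-2*T0..2*T0}"
  shows "\<phi> c x \<in> K"
proof -
  have "-c \<in> {-2*T0..2*T0}" using assms(3) by auto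
  then obtain k where "k \<in> K" "x = \<phi> (-c) k" using assms(2) unfolding KT_def by blast
  then show ?thesis using flow_add[OF assms(1), of c "-c" k] flow_0[OF assms(1)] by simp
qed

lemma pointwise:
  fixes \<phi> :: "real \<Rightarrow> 'a::metric_space \<Rightarrow> 'a"
  assumes fl: "topological_flow \<phi>" and x: "x \<in> KT \<phi> K T0"
    and eta: "\<forall>t\<in>{\<delta>..2*T0}. \<forall>w\<in>K. \<eta> \<le> dist (\<phi> t w) w"
    and rho: "\<forall>t\<in>{-2..2}. \<forall>x z. dist x z < \<rho> \<longrightarrow> dist (\<phi> t x) (\<phi> t z) < \<eta>/2"
    and xz: "dist x z < \<rho>" and e1: "\<epsilon>1 \<le> \<eta>/2"
    and a: "a \<in> {0..2*T0}" and b: "b \<in> {0..2*T0}" and T0: "T0 < 1"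
    and d: "dist (\<phi> a x) (\<phi> b z) < \<epsilon>1"
  shows "\<bar>a - b\<bar> < \<delta>"
proof (rule ccontr)
  assume nd: "\<not> \<bar>a - b\<bar> < \<delta>"
  have "dist (\<phi> b x) (\<phi> b z) < \<eta>/2" using rho xz b T0 by auto
  then have close: "dist (\<phi> a x) (\<phi> b x) < \<eta>"
    using d e1 dist_triangle[of "\<phi> a x" "\<phi> b x" "\<phi> b z"] by (simp add: dist_commute)
  show False
  proof (cases "a \<le> b")
    case True
    have w: "\<phi> a x \<in> K" using KT_flow[OF fl x] a by auto
    have "\<phi> b x = \<phi> (b - a) (\<phi> a x)" using flow_add[OF fl, of "b - a" a x] by simp
    moreover have "b - a \<in> {\<delta>..2*T0}" using nd True a b by auto
    ultimately have "\<eta> \<le> dist (\<phi> b x) (\<phi> a x)" using eta w by auto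
    then show False using close by (simp add: dist_commute)
  next
    case False
    have w: "\<phi> b x \<in> K" using KT_flow[OF fl x] b by auto
    have "\<phi> a x = \<phi> (a - b) (\<phi> b x)" using flow_add[OF fl, of "a - b" b x] by simp
    moreover have "a - b \<in> {\<delta>..2*T0}" using nd False a b by auto
    ultimately have "\<eta> \<le> dist (\<phi> a x) (\<phi> b x)" using eta w by auto
    then show False using close by simp
  qed
qed



lemma pset_shift:
  assumes fl: "topological_flow \<phi>" and xi: "\<xi> \<in> Pset \<phi> T0"
    and n: "of_int n * T0 \<le> s + t0" "s \<le> u" "u + t0 < of_int n * T0 + T0"
  shows "\<xi> (u + t0) = \<phi> (u - s) (\<xi> (s + t0))"
proof -
  have P: "\<xi> (t + of_int n * T0) = \<phi> t (\<xi> (of_int n * T0))" if "t \<in> {0..<T0}" for t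
    using xi that unfolding Pset_def by blast
  have "\<xi> (u + t0) = \<phi> (u + t0 - of_int n * T0) (\<xi> (of_int n * T0))"
    using P[of "u + t0 - of_int n * T0"] n by auto
  also have "\<dots> = \<phi> (u - s) (\<phi> (s + t0 - of_int n * T0) (\<xi> (of_int n * T0)))"
  proof -
    have "u + t0 - of_int n * T0 = (u - s) + (s + t0 - of_int n * T0)" by simp
    then show ?thesis using flow_add[OF fl, of "u - s" "s + t0 - of_int n * T0"] by metis
  qed
  also have "\<phi> (s + t0 - of_int n * T0) (\<xi> (of_int n * T0)) = \<xi> (s + t0)"
    using P[of "s + t0 - of_int n * T0"] n by auto
  finally show ?thesis .
qed

lemma cell_bound:
  fixes \<phi> :: "real \<Rightarrow> 'a::metric_space \<Rightarrow> 'a"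
  assumes fl: "topological_flow \<phi>" and xi: "\<xi> \<in> Pset \<phi> T0" and T0: "0 < T0"
    and gc: "continuous_on UNIV g" and gm: "mono g"
    and close: "\<forall>t\<in>{0..T1}. dist (\<xi> (t + t0)) (\<phi> (g t) y) < \<epsilon>1 \<and>
               \<xi> (t + t0) \<in> KT \<phi> K T0 \<and> \<phi> (g t) y \<in> KT \<phi> K T0"
    and pw: "\<forall>x z a b. x \<in> KT \<phi> K T0 \<longrightarrow> z \<in> KT \<phi> K T0 \<longrightarrow> dist x z < \<epsilon>1 \<longrightarrow>
              a \<in> {0..2*T0} \<longrightarrow> b \<in> {0..2*T0} \<longrightarrow> dist (\<phi> a x) (\<phi> b z) < \<epsilon>1 \<longrightarrow> \<bar>a - b\<bar> < \<delta>"
    and \<delta>: "0 < \<delta>" "\<delta> \<le> T0"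
    and su: "0 \<le> s" "s \<le> u" "u \<le> T1" "of_int n * T0 \<le> s + t0" "u + t0 < of_int n * T0 + T0"
  shows "\<bar>g u - g s - (u - s)\<bar> < \<delta>"
proof -
  define F where "F v = g v - g s - (v - s)" for v
  have cF: "continuous_on {s..u} F" unfolding F_def
    by (intro continuous_intros continuous_on_subset[OF gc]) auto
  have noeq: False if v: "v \<in> {s..u}" "\<bar>F v\<bar> = \<delta>" for v
  proof -
    have s1: "s \<in> {0..T1}" and v1: "v \<in> {0..T1}" using su v by auto
    have xv: "\<xi> (v + t0) = \<phi> (v - s) (\<xi> (s + t0))"
      using pset_shift[OF fl xi su(4), of v] su v by auto
    have zv: "\<phi> (g v) y = \<phi> (g v - g s) (\<phi> (g s) y)"
      using flow_add[OF fl, of "g v - g s" "g s" y] by simp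
    have gsv: "g s \<le> g v" using gm v by (auto simp: mono_def)
    have "v - s < T0" using su v by auto
    have b2: "g v - g s \<le> 2 * T0"
      using v(2) \<open>v - s < T0\<close> \<delta> by (auto simp: F_def abs_if split: if_splits)
    have "\<bar>(v - s) - (g v - g s)\<bar> < \<delta>"
    proof -
      have "dist (\<xi> (v + t0)) (\<phi> (g v) y) < \<epsilon>1" using close v1 by blast
      then have "dist (\<phi> (v - s) (\<xi> (s + t0))) (\<phi> (g v - g s) (\<phi> (g s) y)) < \<epsilon>1"
        using xv zv by simp
      then show ?thesis
      using close s1 v1 gsv v \<delta> b2 \<open>v - s < T0\<close> T0
      by (intro pw[rule_format, of "\<xi> (s + t0)" "\<phi> (g s) y" "v - s" "g v - g s"]) auto
    qed
    then show False using v(2) by (simp add: F_def abs_minus_commute)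
  qed
  show ?thesis
  proof (rule ccontr)
    assume "\<not> ?thesis"
    then have "F u \<ge> \<delta> \<or> F u \<le> -\<delta>" by (auto simp: F_def)
    moreover have "F s = 0" by (simp add: F_def)
    ultimately obtain v where "v \<in> {s..u}" "\<bar>F v\<bar> = \<delta>"
      using IVT'[of F s \<delta> u] IVT2'[of F u "-\<delta>" s] cF su \<delta> by force
    then show False using noeq by blast
  qed
qed

lemma window_bound:
  fixes \<phi> :: "real \<Rightarrow> 'a::metric_space \<Rightarrow> 'a"
  assumes fl: "topological_flow \<phi>" and xi: "\<xi> \<in> Pset \<phi> T0" and T0: "0 < T0"
    and gc: "continuous_on UNIV g" and gm: "mono g"
    and close: "\<forall>t\<in>{0..T1}. dist (\<xi> (t + t0)) (\<phi> (g t) y) < \<epsilon>1 \<and>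
               \<xi> (t + t0) \<in> KT \<phi> K T0 \<and> \<phi> (g t) y \<in> KT \<phi> K T0"
    and pw: "\<forall>x z a b. x \<in> KT \<phi> K T0 \<longrightarrow> z \<in> KT \<phi> K T0 \<longrightarrow> dist x z < \<epsilon>1 \<longrightarrow>
              a \<in> {0..2*T0} \<longrightarrow> b \<in> {0..2*T0} \<longrightarrow> dist (\<phi> a x) (\<phi> b z) < \<epsilon>1 \<longrightarrow> \<bar>a - b\<bar> < \<delta>"
    and \<delta>: "0 < \<delta>" "\<delta> \<le> T0"
    and st: "0 \<le> s" "s \<le> t" "t \<le> T1" "t - s \<le> T0 / 2"
  shows "\<bar>(g t - t) - (g s - s)\<bar> \<le> 2 * \<delta>"
proof -
  note cb = cell_bound[OF fl xi T0 gc gm close pw \<delta>]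
  define n where "n = \<lfloor>(s + t0) / T0\<rfloor>"
  have n1: "of_int n * T0 \<le> s + t0"
    using T0 unfolding n_def by (metis of_int_floor_le pos_le_divide_eq)
  have n2: "s + t0 < of_int n * T0 + T0"
  proof -
    have "(s + t0) / T0 < of_int n + 1" unfolding n_def by linarith
    then show ?thesis using T0 by (simp add: divide_less_eq algebra_simps)
  qed
  show ?thesis
  proof (cases "t + t0 < of_int n * T0 + T0")
    case True
    then show ?thesis using cb[where s=s and u=t and n=n] st n1 by auto
  next
    case False
    define m where "m = of_int n * T0 + T0 - t0"
    have m: "s < m" "m \<le> t" using n2 False by (auto simp: m_def)
    have lt: "\<bar>g u - g s - (u - s)\<bar> < \<delta>" if "u \<in> {s<..<m}" for u
      using cb[where s=s and u=u and n=n] that st n1 m by (auto simp: m_def)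
    have "\<bar>g m - g s - (m - s)\<bar> \<le> \<delta>"
    proof (rule tendsto_le[of "at_left m" "\<lambda>_. \<delta>" \<delta> "\<lambda>u. \<bar>g u - g s - (u - s)\<bar>"])
      show "at_left m \<noteq> bot" by simp
      show "((\<lambda>_. \<delta>) \<longlongrightarrow> \<delta>) (at_left m)" by simp
      have "isCont g m" using gc by (simp add: continuous_on_eq_continuous_at)
      then have "(g \<longlongrightarrow> g m) (at_left m)"
        by (simp add: isCont_def filterlim_at_split)
      then show "((\<lambda>u. \<bar>g u - g s - (u - s)\<bar>) \<longlongrightarrow> \<bar>g m - g s - (m - s)\<bar>) (at_left m)"
        by (intro tendsto_intros) (auto intro: tendsto_ident_at)
      show "\<forall>\<^sub>F u in at_left m. \<bar>g u - g s - (u - s)\<bar> \<le> \<delta>"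
        using eventually_mono[OF eventually_at_left_real[OF m(1)]] lt by (meson less_imp_le)
    qed
    moreover have "\<bar>g t - g m - (t - m)\<bar> < \<delta>"
      using cb[where s=m and u=t and n="n+1"] m st n2 T0 by (auto simp: m_def algebra_simps)
    ultimately show ?thesis by linarith
  qed
qed



lemma rep_eps_lip:
  fixes H :: "real \<Rightarrow> real"
  assumes lip: "\<And>a b. \<bar>H a - H b\<bar> \<le> L * \<bar>a - b\<bar>" and L: "0 \<le> L" "L < \<epsilon>" "L < 1"
  shows "(\<lambda>t. t + H t) \<in> Rep_eps \<epsilon>"
proof -
  define f where "f = (\<lambda>t. t + H t)"
  have lo: "f a - f b \<ge> (1 - L) * (a - b)" if "a \<ge> b" for a b
    using lip[of a b] that by (auto simp: f_def algebra_simps abs_le_iff)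
  have sm: "strict_mono f"
    unfolding strict_mono_def using lo L(3)
    by (smt (verit) mult_pos_pos)
  have cH: "continuous_on UNIV H"
  proof -
    have "lipschitz_on L UNIV H"
      unfolding lipschitz_on_def using lip L by (auto simp: dist_real_def)
    then show ?thesis by (rule lipschitz_on_continuous_on)
  qed
  then have cf: "continuous_on UNIV f" unfolding f_def by (intro continuous_intros)
  have surj: "surj f"
  proof -
    { fix y :: real
      define b where "b = (\<bar>y\<bar> + \<bar>H 0\<bar>) / (1 - L)"
      have b0: "b \<ge> 0" using L by (simp add: b_def)
      have "(1 - L) * b = \<bar>y\<bar> + \<bar>H 0\<bar>" using L by (simp add: b_def)
      moreover have "f b \<ge> f 0 + (1 - L) * b" using lo[of 0 b] b0 by simp
      moreover have "f (-b) \<le> f 0 - (1 - L) * b" using lo[of "-b" 0] b0 by simp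
      moreover have "f 0 = H 0" by (simp add: f_def)
      ultimately have "f (-b) \<le> y" "y \<le> f b" by auto
      then have "\<exists>x. f x = y"
        using IVT'[of f "-b" y b] cf b0 continuous_on_subset by (metis le_minus_iff neg_le_0_iff_le order.trans subset_UNIV)
    }
    then show ?thesis by (metis surjI)
  qed
  have inj: "inj f" using sm strict_mono_imp_inj_on by blast
  have ci: "continuous_on UNIV (inv f)"
  proof -
    have "lipschitz_on (1 / (1 - L)) UNIV (inv f)"
      unfolding lipschitz_on_def
    proof (intro conjI ballI)
      show "0 \<le> 1 / (1 - L)" using L by simp
      fix x y :: real
      obtain a b where ab: "f a = x" "f b = y" using surj by (metis surjD)
      have "(1 - L) * \<bar>a - b\<bar> \<le> \<bar>f a - f b\<bar>"
        using lo[of a b] lo[of b a] by (cases "a \<ge> b") (auto simp: abs_if algebra_simps)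
      then have "\<bar>a - b\<bar> \<le> \<bar>f a - f b\<bar> / (1 - L)" using L by (simp add: field_simps)
      then show "dist (inv f x) (inv f y) \<le> 1 / (1 - L) * dist x y"
        using ab inv_f_f[OF inj] by (auto simp: dist_real_def)
    qed
    then show ?thesis by (rule lipschitz_on_continuous_on)
  qed
  have "homeomorphism UNIV UNIV f (inv f)"
    unfolding homeomorphism_def using cf ci surj inj
    by (auto simp: surj_f_inv_f inv_f_f) (metis UNIV_I image_eqI inv_f_f)
  moreover have "\<bar>(f a - f b) / (a - b) - 1\<bar> < \<epsilon>" if "a > b" for a b
  proof -
    have "(f a - f b) / (a - b) - 1 = (H a - H b) / (a - b)"
      using that by (simp add: f_def field_simps)
    also have "\<bar>\<dots>\<bar> \<le> L" using lip[of a b] that by (simp add: abs_divide divide_le_eq)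
    finally show ?thesis using L by simp
  qed
  ultimately show ?thesis unfolding Rep_eps_def Rep_def f_def[symmetric] using sm by blast
qed



lemma lip_regularize:
  fixes h :: "real \<Rightarrow> real"
  assumes bnd: "\<And>s t. s \<in> {0..T1} \<Longrightarrow> t \<in> {0..T1} \<Longrightarrow> \<bar>h t - h s\<bar> \<le> D + L * \<bar>t - s\<bar>"
    and L: "0 \<le> L" and D: "0 \<le> D" and T: "0 < T0" "T0 \<le> T1"
  shows "\<exists>H. (\<forall>a b. \<bar>H a - H b\<bar> \<le> (L + D / T0) * \<bar>a - b\<bar>) \<and> H 0 = h 0 \<and> H T1 = h T1 \<and>
             (\<forall>t\<in>{0..T1}. \<bar>H t - h t\<bar> \<le> D)"
proof -
  define q where "q t = Inf ((\<lambda>s. h s + L * \<bar>t - s\<bar>) ` {0..T1})" for t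
  have ne: "(\<lambda>s. h s + L * \<bar>t - s\<bar>) ` {0..T1} \<noteq> {}" for t using T by auto
  have qlow: "q t \<ge> h t - D" if "t \<in> {0..T1}" for t
    unfolding q_def
  proof (rule cInf_greatest[OF ne])
    fix x assume "x \<in> (\<lambda>s. h s + L * \<bar>t - s\<bar>) ` {0..T1}"
    then obtain s where s: "s \<in> {0..T1}" "x = h s + L * \<bar>t - s\<bar>" by auto
    show "h t - D \<le> x" using bnd[OF s(1) that] s(2) by auto
  qed
  have bdd: "bdd_below ((\<lambda>s. h s + L * \<bar>t - s\<bar>) ` {0..T1})" if "t \<in> {0..T1}" for t
    unfolding bdd_below_def
    using bnd[OF _ that] by (intro exI[of _ "h t - D"]) (force simp: abs_le_iff)
  have qup: "q t \<le> h t" if "t \<in> {0..T1}" for t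
  proof -
    have "h t + L * \<bar>t - t\<bar> \<in> (\<lambda>s. h s + L * \<bar>t - s\<bar>) ` {0..T1}" using that by blast
    then show ?thesis unfolding q_def using cInf_lower[OF _ bdd[OF that]] by fastforce
  qed
  have qlip: "q t' \<ge> q t - L * \<bar>t - t'\<bar>" if "t \<in> {0..T1}" "t' \<in> {0..T1}" for t t'
    unfolding q_def
  proof (rule cInf_greatest[OF ne])
    fix x assume "x \<in> (\<lambda>s. h s + L * \<bar>t' - s\<bar>) ` {0..T1}"
    then obtain s where s: "s \<in> {0..T1}" "x = h s + L * \<bar>t' - s\<bar>" by auto
    have "Inf ((\<lambda>s. h s + L * \<bar>t - s\<bar>) ` {0..T1}) \<le> h s + L * \<bar>t - s\<bar>"
      using cInf_lower[OF _ bdd[OF that(1)]] s(1) by auto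
    moreover have "L * \<bar>t - s\<bar> \<le> L * \<bar>t' - s\<bar> + L * \<bar>t - t'\<bar>"
      using L by (simp add: distrib_left[symmetric] mult_left_mono)
    ultimately show "Inf ((\<lambda>s. h s + L * \<bar>t - s\<bar>) ` {0..T1}) - L * \<bar>t - t'\<bar> \<le> x"
      using s(2) by linarith
  qed
  define \<alpha> where "\<alpha> = h 0 - q 0"
  define \<beta> where "\<beta> = h T1 - q T1"
  have ab: "0 \<le> \<alpha>" "\<alpha> \<le> D" "0 \<le> \<beta>" "\<beta> \<le> D"
    using qlow[of 0] qup[of 0] qlow[of T1] qup[of T1] T by (auto simp: \<alpha>_def \<beta>_def)
  define h' where "h' t = q t + \<alpha> * (1 - t / T1) + \<beta> * (t / T1)" for t
  define c where "c t = max 0 (min T1 t)" for t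
  define H where "H t = h' (c t)" for t
  have c_in: "c t \<in> {0..T1}" for t using T by (auto simp: c_def)
  have c_lip: "\<bar>c a - c b\<bar> \<le> \<bar>a - b\<bar>" for a b by (auto simp: c_def)
  have h'lip: "\<bar>h' a - h' b\<bar> \<le> (L + D / T0) * \<bar>a - b\<bar>" if "a \<in> {0..T1}" "b \<in> {0..T1}" for a b
  proof -
    have q: "\<bar>q a - q b\<bar> \<le> L * \<bar>a - b\<bar>"
      using qlip[OF that] qlip[OF that(2,1)] by (auto simp: abs_le_iff abs_minus_commute)
    have "h' a - h' b = (q a - q b) + (\<beta> - \<alpha>) * (a - b) / T1"
      using T by (simp add: h'_def field_simps)
    moreover have "\<bar>(\<beta> - \<alpha>) * (a - b) / T1\<bar> \<le> D / T0 * \<bar>a - b\<bar>"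
    proof -
      have "\<bar>\<beta> - \<alpha>\<bar> \<le> D" using ab by auto
      have "\<bar>(\<beta> - \<alpha>) * (a - b) / T1\<bar> = \<bar>\<beta> - \<alpha>\<bar> * \<bar>a - b\<bar> / T1"
        using T by (simp add: abs_mult)
      also have "\<dots> \<le> D * \<bar>a - b\<bar> / T1"
        using \<open>\<bar>\<beta> - \<alpha>\<bar> \<le> D\<close> T by (intro divide_right_mono mult_right_mono) auto
      also have "\<dots> \<le> D * \<bar>a - b\<bar> / T0"
        using T D by (intro divide_left_mono) auto
      finally show ?thesis by simp
    qed
    ultimately have "\<bar>h' a - h' b\<bar> \<le> L * \<bar>a - b\<bar> + D / T0 * \<bar>a - b\<bar>"
      using q abs_triangle_ineq[of "q a - q b" "(\<beta> - \<alpha>) * (a - b) / T1"] by linarith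
    then show ?thesis by (simp add: distrib_right)
  qed
  have Hlip: "\<bar>H a - H b\<bar> \<le> (L + D / T0) * \<bar>a - b\<bar>" for a b
  proof -
    have "\<bar>H a - H b\<bar> \<le> (L + D / T0) * \<bar>c a - c b\<bar>"
      unfolding H_def by (rule h'lip[OF c_in c_in])
    also have "\<dots> \<le> (L + D / T0) * \<bar>a - b\<bar>"
      using c_lip L D T by (intro mult_left_mono) auto
    finally show ?thesis .
  qed
  have "H 0 = h 0" using T by (simp add: H_def c_def h'_def \<alpha>_def)
  moreover have "H T1 = h T1" using T by (simp add: H_def c_def h'_def \<beta>_def)
  moreover have "\<bar>H t - h t\<bar> \<le> D" if "t \<in> {0..T1}" for t
  proof -
    have ct: "c t = t" using that by (auto simp: c_def)
    have "0 \<le> \<alpha> * (1 - t / T1) + \<beta> * (t / T1)"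
      using ab that T by (intro add_nonneg_nonneg mult_nonneg_nonneg) auto
    moreover have "\<alpha> * (1 - t / T1) + \<beta> * (t / T1) \<le> D * (1 - t / T1) + D * (t / T1)"
      using ab that T by (intro add_mono mult_right_mono) auto
    moreover have "D * (1 - t / T1) + D * (t / T1) = D" by (simp add: algebra_simps)
    ultimately show ?thesis using qlow[OF that] qup[OF that] unfolding H_def ct h'_def by auto
  qed
  ultimately show ?thesis using Hlip by blast
qed



theorem proposition2p1:
  fixes \<phi> :: "real \<Rightarrow> 'a::metric_space \<Rightarrow> 'a"
    and K :: "'a set" and T0 :: real
  assumes "topological_flow \<phi>"
    and "compact (UNIV :: 'a set)"
    and "compact K"
    and "K \<inter> Sing \<phi> = {}"
    and "0 < T0" and "T0 < 1"
    and "\<forall>t\<in>{0<..2*T0}. \<forall>x\<in>K. \<phi> t x \<noteq> x"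
  shows "\<forall>\<epsilon>>0. \<exists>\<epsilon>1>0. \<forall>\<xi> t0 T1 g y.
           \<xi> \<in> Pset \<phi> T0 \<and> T1 \<ge> T0 \<and> g \<in> Rep \<and> g 0 = 0 \<and>
           (\<forall>t\<in>{0..T1}. dist (\<xi> (t + t0)) (\<phi> (g t) y) < \<epsilon>1 \<and>
               \<xi> (t + t0) \<in> (\<Inter>s\<in>{-2*T0..2*T0}. \<phi> s ` K) \<and>
               \<phi> (g t) y \<in> (\<Inter>s\<in>{-2*T0..2*T0}. \<phi> s ` K))
           \<longrightarrow> (\<exists>g'. g' \<in> Rep_eps \<epsilon> \<and> g' 0 = g 0 \<and> g' T1 = g T1 \<and>
                 (\<forall>t\<in>{0..T1}. dist (\<xi> (t + t0)) (\<phi> (g' t) y) < \<epsilon>))"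
proof (intro allI impI)
  fix \<epsilon> :: real assume e: "\<epsilon> > 0"
  note fl = assms(1) and T0 = assms(5,6)
  obtain \<sigma> where \<sigma>: "\<sigma> > 0" "\<forall>t x. \<bar>t\<bar> < \<sigma> \<longrightarrow> dist (\<phi> t x) x < \<epsilon>/2"
    using flow_uc_time[OF fl assms(2), of "\<epsilon>/2"] e by auto
  define \<delta> where "\<delta> = min (T0/12) (min (\<epsilon>*T0/12) (\<sigma>/4))"
  have \<delta>: "0 < \<delta>" "\<delta> \<le> T0/12" "\<delta> \<le> \<epsilon>*T0/12" "\<delta> \<le> \<sigma>/4"
    using T0 e \<sigma> by (auto simp: \<delta>_def)
  obtain \<eta> where \<eta>: "\<eta> > 0" "\<forall>t\<in>{\<delta>..2*T0}. \<forall>x\<in>K. \<eta> \<le> dist (\<phi> t x) x"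
    using flow_eta[OF fl assms(3) assms(7) \<delta>(1)] by auto
  obtain \<rho> where \<rho>: "\<rho> > 0" "\<forall>t\<in>{-2..2}. \<forall>x z. dist x z < \<rho> \<longrightarrow> dist (\<phi> t x) (\<phi> t z) < \<eta>/2"
    using flow_uc_space[OF fl assms(2), of "\<eta>/2"] \<eta> by auto
  define \<epsilon>1 where "\<epsilon>1 = min \<rho> (min (\<eta>/2) (\<epsilon>/2))"
  have e1: "\<epsilon>1 > 0" "\<epsilon>1 \<le> \<rho>" "\<epsilon>1 \<le> \<eta>/2" "\<epsilon>1 \<le> \<epsilon>/2"
    using \<rho> \<eta> e by (auto simp: \<epsilon>1_def)
  show "\<exists>\<epsilon>1>0. \<forall>\<xi> t0 T1 g y.
           \<xi> \<in> Pset \<phi> T0 \<and> T1 \<ge> T0 \<and> g \<in> Rep \<and> g 0 = 0 \<and>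
           (\<forall>t\<in>{0..T1}. dist (\<xi> (t + t0)) (\<phi> (g t) y) < \<epsilon>1 \<and>
               \<xi> (t + t0) \<in> (\<Inter>s\<in>{-2*T0..2*T0}. \<phi> s ` K) \<and>
               \<phi> (g t) y \<in> (\<Inter>s\<in>{-2*T0..2*T0}. \<phi> s ` K))
           \<longrightarrow> (\<exists>g'. g' \<in> Rep_eps \<epsilon> \<and> g' 0 = g 0 \<and> g' T1 = g T1 \<and>
                 (\<forall>t\<in>{0..T1}. dist (\<xi> (t + t0)) (\<phi> (g' t) y) < \<epsilon>))"
  proof (intro exI[of _ \<epsilon>1] conjI allI impI)
    show "\<epsilon>1 > 0" by (rule e1(1))
    fix \<xi> t0 T1 g y
    assume H: "\<xi> \<in> Pset \<phi> T0 \<and> T1 \<ge> T0 \<and> g \<in> Rep \<and> g 0 = 0 \<and>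
           (\<forall>t\<in>{0..T1}. dist (\<xi> (t + t0)) (\<phi> (g t) y) < \<epsilon>1 \<and>
               \<xi> (t + t0) \<in> (\<Inter>s\<in>{-2*T0..2*T0}. \<phi> s ` K) \<and>
               \<phi> (g t) y \<in> (\<Inter>s\<in>{-2*T0..2*T0}. \<phi> s ` K))"
    have xi: "\<xi> \<in> Pset \<phi> T0" and T1: "T0 \<le> T1" and g0: "g 0 = 0" using H by auto
    have close: "\<forall>t\<in>{0..T1}. dist (\<xi> (t + t0)) (\<phi> (g t) y) < \<epsilon>1 \<and>
               \<xi> (t + t0) \<in> KT \<phi> K T0 \<and> \<phi> (g t) y \<in> KT \<phi> K T0"
      using H unfolding KT_def by blast
    obtain g2 where "homeomorphism UNIV UNIV g g2" "strict_mono g"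
      using H unfolding Rep_def by auto
    then have gc: "continuous_on UNIV g" and gm: "mono g"
      by (auto simp: homeomorphism_def strict_mono_mono)
    have pw: "\<forall>x z a b. x \<in> KT \<phi> K T0 \<longrightarrow> z \<in> KT \<phi> K T0 \<longrightarrow> dist x z < \<epsilon>1 \<longrightarrow>
              a \<in> {0..2*T0} \<longrightarrow> b \<in> {0..2*T0} \<longrightarrow> dist (\<phi> a x) (\<phi> b z) < \<epsilon>1 \<longrightarrow> \<bar>a - b\<bar> < \<delta>"
    proof (intro allI impI)
      fix x z a b assume "x \<in> KT \<phi> K T0" "z \<in> KT \<phi> K T0" "dist x z < \<epsilon>1"
        "a \<in> {0..2*T0}" "b \<in> {0..2*T0}" "dist (\<phi> a x) (\<phi> b z) < \<epsilon>1"
      then show "\<bar>a - b\<bar> < \<delta>"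
        using pointwise[OF fl _ \<eta>(2) \<rho>(2) _ e1(3) _ _ T0(2), of x z a b] e1(2) by auto
    qed
    define h where "h t = g t - t" for t
    have loc: "\<bar>h t - h s\<bar> \<le> 2 * \<delta>" if "0 \<le> s" "s \<le> t" "t \<le> T1" "t - s \<le> T0 / 2" for s t
      using window_bound[OF fl xi T0(1) gc gm close pw \<delta>(1) _ that] \<delta> T0 unfolding h_def by auto
    have bnd: "\<bar>h t - h s\<bar> \<le> 2 * \<delta> + (2 * \<delta>) / (T0 / 2) * \<bar>t - s\<bar>"
      if "s \<in> {0..T1}" "t \<in> {0..T1}" for s t
      using chain_bound[of T1 "T0/2" h "2*\<delta>" s t] loc that T0 \<delta> by auto
    have "\<exists>H. (\<forall>a b. \<bar>H a - H b\<bar> \<le> ((2 * \<delta>) / (T0 / 2) + 2 * \<delta> / T0) * \<bar>a - b\<bar>) \<and>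
      H 0 = h 0 \<and> H T1 = h T1 \<and> (\<forall>t\<in>{0..T1}. \<bar>H t - h t\<bar> \<le> 2 * \<delta>)"
      by (rule lip_regularize[OF bnd]) (use T0 \<delta> T1 in auto)
    then obtain HH where HH: "\<forall>a b. \<bar>HH a - HH b\<bar> \<le> ((2 * \<delta>) / (T0 / 2) + 2 * \<delta> / T0) * \<bar>a - b\<bar>"
      "HH 0 = h 0" "HH T1 = h T1" "\<forall>t\<in>{0..T1}. \<bar>HH t - h t\<bar> \<le> 2 * \<delta>"
      by blast
    define Lc where "Lc = (2 * \<delta>) / (T0 / 2) + 2 * \<delta> / T0"
    have Lc: "Lc = 6 * \<delta> / T0" using T0 by (simp add: Lc_def field_simps)
    have Lc1: "0 \<le> Lc" "Lc < \<epsilon>" "Lc < 1"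
    proof -
      show "0 \<le> Lc" using Lc \<delta> T0 by simp
      have LcT: "Lc * T0 = 6 * \<delta>" using Lc T0 by (simp add: field_simps)
      have "(Lc * 2) * T0 = 2 * (Lc * T0)" by (simp add: algebra_simps)
      then have "(Lc * 2) * T0 \<le> \<epsilon> * T0" using LcT \<delta>(3) by linarith
      then have "Lc \<le> \<epsilon> / 2" using T0 mult_right_le_imp_le[of "Lc*2" T0 \<epsilon>] by simp
      then show "Lc < \<epsilon>" using e by linarith
      have "(Lc * 2) * T0 = 2 * (Lc * T0)" by (simp add: algebra_simps)
      then have "(Lc * 2) * T0 \<le> 1 * T0" using LcT \<delta>(2) by linarith
      then have "Lc \<le> 1 / 2" using T0 mult_right_le_imp_le[of "Lc*2" T0 1] by simp
      then show "Lc < 1" by linarith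
    qed
    show "\<exists>g'. g' \<in> Rep_eps \<epsilon> \<and> g' 0 = g 0 \<and> g' T1 = g T1 \<and>
                 (\<forall>t\<in>{0..T1}. dist (\<xi> (t + t0)) (\<phi> (g' t) y) < \<epsilon>)"
    proof (intro exI[of _ "\<lambda>t. t + HH t"] conjI ballI)
      show "(\<lambda>t. t + HH t) \<in> Rep_eps \<epsilon>"
        using rep_eps_lip[of HH Lc \<epsilon>] HH(1) Lc1 unfolding Lc_def by auto
      show "0 + HH 0 = g 0" using HH(2) by (simp add: h_def)
      show "T1 + HH T1 = g T1" using HH(3) by (simp add: h_def)
      fix t assume t: "t \<in> {0..T1}"
      have d1: "dist (\<xi> (t + t0)) (\<phi> (g t) y) < \<epsilon>1" using close t by blast
      have "\<bar>HH t - h t\<bar> \<le> 2 * \<delta>" using HH(4) t by blast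
      moreover have "(t + HH t) - g t = HH t - h t" by (simp add: h_def)
      ultimately have "\<bar>(t + HH t) - g t\<bar> \<le> 2 * \<delta>" by simp
      then have "\<bar>(t + HH t) - g t\<bar> < \<sigma>" using \<delta> \<sigma> by linarith
      then have "dist (\<phi> ((t + HH t) - g t) (\<phi> (g t) y)) (\<phi> (g t) y) < \<epsilon>/2" using \<sigma>(2) by blast
      moreover have "\<phi> ((t + HH t) - g t) (\<phi> (g t) y) = \<phi> (t + HH t) y"
        using flow_add[OF fl, of "(t + HH t) - g t" "g t" y] by simp
      ultimately have d2: "dist (\<phi> (g t) y) (\<phi> (t + HH t) y) < \<epsilon>/2" by (simp add: dist_commute)
      show "dist (\<xi> (t + t0)) (\<phi> (t + HH t) y) < \<epsilon>"
        using dist_triangle[of "\<xi> (t + t0)" "\<phi> (t + HH t) y" "\<phi> (g t) y"] d1 d2 e1(4) by linarith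
    qed
  qed
qed


end
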